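(* There exists a universal constant $c>0$ with the following property. Let $d,m,n\ge3$ be integers satisfying $d\le m\le n$ and $n\ge (m\log m)/d$. Suppose that $s\in\mathbb{N}$ satisfies $$s\le\frac{c}{d}\left(\frac{m^d}{n^2}\right)^{\frac{1}{d-2}}.$$ Then there exists an $m$-by-$n$ matrix $A$ with entries in $\{0,1\}$ such that: (i) any $s$ of the columns of $A$ are linearly independent over the field $\mathbb{Z}/(2\mathbb{Z})$; (ii) every column of $A$ has at most $d$ nonzero entries; (iii) every row of $A$ has at most $5dn/m$ nonzero entries.
   Context: $\log$ is the natural logarithm. *)

theory Defs
  imports Complex_Main "HOL-Library.Z2"
begin

text \<open>An m-by-n matrix over the field Z/2Z (type bit) is represented as
  A :: nat => nat => bit, entry (i,j) = A i j for i < m, j < n.\<close>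

definition gf2_cols_lin_indep :: "nat \<Rightarrow> (nat \<Rightarrow> nat \<Rightarrow> bit) \<Rightarrow> nat set \<Rightarrow> bool" where
  "gf2_cols_lin_indep m A S \<longleftrightarrow>
     (\<forall>f :: nat \<Rightarrow> bit. (\<forall>i<m. (\<Sum>j\<in>S. f j * A i j) = 0) \<longrightarrow> (\<forall>j\<in>S. f j = 0))"

end

theory Submission
  imports Defs "HOL-Library.FuncSet"
begin


lemma pow_le_3_fact: "real k ^ k \<le> 3 ^ k * fact k"
proof (induction k)
  case 0 then show ?case by simp
next
  case (Suc k)
  show ?case
  proof (cases "k = 0")
    case True then show ?thesis by simp
  next
    case False
    have "(1 + 1 / real k) ^ k \<le> exp 1"
      using exp_ge_one_plus_x_over_n_power_n[where x=1 and n=k] False by simp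
    also have "\<dots> \<le> 3" by (rule exp_le)
    finally have h: "(1 + 1 / real k) ^ k \<le> 3" .
    have "(real k + 1) ^ k = (1 + 1 / real k) ^ k * real k ^ k"
      using False by (simp add: power_mult_distrib[symmetric] field_simps)
    also have "\<dots> \<le> 3 * real k ^ k" using h by (intro mult_right_mono) auto
    finally have h2: "(real k + 1) ^ k \<le> 3 * real k ^ k" .
    have "real (Suc k) ^ Suc k = (real k + 1) * (real k + 1) ^ k" by (simp add: add.commute)
    also have "\<dots> \<le> (real k + 1) * (3 * real k ^ k)" using h2 by (intro mult_left_mono) auto
    also have "\<dots> \<le> (real k + 1) * (3 * (3 ^ k * fact k))" using Suc.IH by (intro mult_left_mono) auto
    also have "\<dots> = 3 ^ Suc k * fact (Suc k)" by (simp add: algebra_simps)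
    finally show ?thesis .
  qed
qed

lemma binom_fact_le_pow: "real (n choose k) * fact k \<le> real n ^ k"
proof (cases "k \<le> n")
  case True
  have "real (n choose k) * fact k = fact n / fact (n-k)"
    using fact_binomial[OF True, where 'a=real] by (simp add: mult.commute)
  also have "\<dots> = real (fact n div fact (n-k))"
    by (subst real_of_nat_div) (auto simp: fact_dvd)
  also have "\<dots> \<le> real n ^ k" using fact_div_fact_le_pow[OF True]
    by (metis of_nat_le_iff of_nat_power)
  finally show ?thesis .
qed (simp add: binomial_eq_0)

lemma binom_bound: "real (n choose k) * real k ^ k \<le> (3 * real n) ^ k"
proof -
  have "real (n choose k) * real k ^ k \<le> real (n choose k) * (3 ^ k * fact k)"
    by (intro mult_left_mono pow_le_3_fact) auto
  also have "\<dots> = 3 ^ k * (real (n choose k) * fact k)" by simp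
  also have "\<dots> \<le> 3 ^ k * real n ^ k" by (intro mult_left_mono binom_fact_le_pow) auto
  finally show ?thesis by (simp add: power_mult_distrib)
qed




lemma fiber_partner:
  assumes "finite Q" "x \<in> Q" "even (card {p\<in>Q. g p = g x})"
  shows "\<exists>y\<in>Q. y \<noteq> x \<and> g y = g x"
proof (rule ccontr)
  assume "\<not> ?thesis"
  then have "{p\<in>Q. g p = g x} = {x}" using assms(2) by auto
  then show False using assms(3) by simp
qed

lemma fiber_remove:
  assumes "x \<in> Q" "y \<in> Q" "x \<noteq> y" "g y = g x" "finite Q"
    "even (card {p\<in>Q. g p = v})"
  shows "even (card {p\<in>Q - {x, y}. g p = v})"
proof (cases "v = g x")
  case True
  have "{p\<in>Q - {x, y}. g p = v} = {p\<in>Q. g p = v} - {x, y}" by auto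
  moreover have "{x, y} \<subseteq> {p\<in>Q. g p = v}" using assms True by auto
  ultimately have "card {p\<in>Q - {x, y}. g p = v} = card {p\<in>Q. g p = v} - 2"
    using assms by (simp add: card_Diff_subset)
  moreover have "card {p\<in>Q. g p = v} \<ge> 2"
  proof -
    have "card {x, y} \<le> card {p\<in>Q. g p = v}"
      using \<open>{x, y} \<subseteq> _\<close> assms by (intro card_mono) auto
    then show ?thesis using assms by simp
  qed
  ultimately show ?thesis using assms(6) by auto
next
  case False
  have "{p\<in>Q - {x, y}. g p = v} = {p\<in>Q. g p = v}" using False assms by auto
  then show ?thesis using assms by simp
qed

lemma even_fibers_card:
  assumes "finite Q" "\<forall>v. even (card {p\<in>Q. g p = v})"
  shows "even (card Q)"
  using assms
proof (induction "card Q" arbitrary: Q rule: less_induct)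
  case less
  show ?case
  proof (cases "Q = {}")
    case True then show ?thesis by simp
  next
    case False
    then obtain x where x: "x \<in> Q" by auto
    obtain y where y: "y \<in> Q" "y \<noteq> x" "g y = g x"
      using fiber_partner[OF less.prems(1) x] less.prems(2) by blast
    have ev: "\<forall>v. even (card {p\<in>Q - {x, y}. g p = v})"
      using fiber_remove[OF x y(1) y(2)[symmetric] y(3) less.prems(1)] less.prems(2) by blast
    have c: "card (Q - {x, y}) = card Q - 2" using x y less.prems(1) by (simp add: card_Diff_subset)
    have "card Q \<ge> 2"
    proof -
      have "card {x, y} \<le> card Q" using x y less.prems(1) by (intro card_mono) auto
      then show ?thesis using y by simp
    qed
    then have "even (card (Q - {x, y}))"
      using less.hyps[of "Q - {x,y}"] c less.prems(1) ev by auto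
    then show ?thesis using c \<open>card Q \<ge> 2\<close> by auto
  qed
qed

definition EV :: "nat \<Rightarrow> 'a set \<Rightarrow> 'a set \<Rightarrow> ('a \<Rightarrow> nat) set" where
  "EV m Q P = {g \<in> PiE P (\<lambda>_. {..<m}). \<forall>v. even (card {p\<in>Q. g p = v})}"

lemma card_PiE_const: "finite P \<Longrightarrow> card (PiE P (\<lambda>_. {..<m::nat})) = m ^ card P"
  by (simp add: card_PiE)

lemma EV_count:
  assumes "finite P" "Q \<subseteq> P"
  shows "card (EV m Q P) \<le> (card Q * m) ^ (card Q div 2) * m ^ (card P - card Q)"
  using assms
proof (induction "card Q" arbitrary: Q P rule: less_induct)
  case less
  have fQ: "finite Q" using less.prems finite_subset by auto
  show ?case
  proof (cases "Q = {}")
    case True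
    then have "EV m Q P = PiE P (\<lambda>_. {..<m})" by (auto simp: EV_def)
    then show ?thesis using True less.prems by (simp add: card_PiE_const)
  next
    case False
    then obtain x where x: "x \<in> Q" by auto
    show ?thesis
    proof (cases "even (card Q)")
      case False
      have "EV m Q P = {}"
      proof (rule equals0I)
        fix g assume "g \<in> EV m Q P"
        then have "\<forall>v. even (card {p\<in>Q. g p = v})" by (simp add: EV_def)
        then show False using even_fibers_card[OF fQ] False by blast
      qed
      then show ?thesis by simp
    next
      case evQ: True
      have cQ2: "card Q \<ge> 2"
      proof -
        have "card Q \<noteq> 0" using fQ x by auto
        then show ?thesis using evQ by presburger
      qed
      define yf where "yf g = (SOME y. y \<in> Q \<and> y \<noteq> x \<and> g y = g x)" for g :: "'a \<Rightarrow> nat"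
      have yf: "yf g \<in> Q \<and> yf g \<noteq> x \<and> g (yf g) = g x" if "g \<in> EV m Q P" for g
      proof -
        have "\<exists>y\<in>Q. y \<noteq> x \<and> g y = g x"
          using fiber_partner[OF fQ x] that by (auto simp: EV_def)
        then show ?thesis unfolding yf_def by (rule someI2_bex) auto
      qed
      define \<Phi> where "\<Phi> g = (yf g, g x, restrict g (P - {x, yf g}))" for g :: "'a \<Rightarrow> nat"
      define S where "S = Sigma (Q - {x}) (\<lambda>y. {..<m} \<times> EV m (Q - {x, y}) (P - {x, y}))"
      have inj: "inj_on \<Phi> (EV m Q P)"
      proof (rule inj_onI)
        fix g h assume g: "g \<in> EV m Q P" and h: "h \<in> EV m Q P" and e: "\<Phi> g = \<Phi> h"
        then have e1: "yf g = yf h" and e2: "g x = h x" and e3: "restrict g (P - {x, yf g}) = restrict h (P - {x, yf g})"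
          by (auto simp: \<Phi>_def)
        show "g = h"
        proof
          fix p
          show "g p = h p"
          proof (cases "p \<in> P")
            case False
            then show ?thesis using g h by (auto simp: EV_def PiE_def extensional_def)
          next
            case True
            show ?thesis
            proof (cases "p = x")
              case True then show ?thesis using e2 by simp
            next
              case px: False
              show ?thesis
              proof (cases "p = yf g")
                case True
                then show ?thesis using yf[OF g] yf[OF h] e1 e2 by metis
              next
                case False
                then have "p \<in> P - {x, yf g}" using px True by auto
                then show ?thesis using e3 by (metis restrict_apply')
              qed
            qed
          qed
        qed
      qed
      have img: "\<Phi> ` EV m Q P \<subseteq> S"
      proof
        fix z assume "z \<in> \<Phi> ` EV m Q P"
        then obtain g where g: "g \<in> EV m Q P" and z: "z = \<Phi> g" by auto
        have gP: "g \<in> PiE P (\<lambda>_. {..<m})" and gev: "\<forall>v. even (card {p\<in>Q. g p = v})"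
          using g by (auto simp: EV_def)
        have xP: "x \<in> P" using x less.prems by auto
        have "g x < m" using gP xP by auto
        moreover have "restrict g (P - {x, yf g}) \<in> EV m (Q - {x, yf g}) (P - {x, yf g})"
        proof -
          have "restrict g (P - {x, yf g}) \<in> PiE (P - {x, yf g}) (\<lambda>_. {..<m})"
            using gP by auto
          moreover have "even (card {p\<in>Q - {x, yf g}. restrict g (P - {x, yf g}) p = v})" for v
          proof -
            have "{p\<in>Q - {x, yf g}. restrict g (P - {x, yf g}) p = v} = {p\<in>Q - {x, yf g}. g p = v}"
              using less.prems by auto
            then show ?thesis
              using fiber_remove[OF x, of "yf g" g, OF _ _ _ fQ] yf[OF g] gev by auto
          qed
          ultimately show ?thesis by (auto simp: EV_def)
        qed
        ultimately show "z \<in> S" using yf[OF g] z by (auto simp: S_def \<Phi>_def)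
      qed
      have finEV: "finite (EV m Q' P')" if "finite P'" for Q' P'
        by (rule finite_subset[of _ "PiE P' (\<lambda>_. {..<m})"]) (auto simp: EV_def intro: finite_PiE that)
      have fin: "finite S" unfolding S_def
        using fQ less.prems by (intro finite_SigmaI finite_cartesian_product finEV) auto
      have "card (EV m Q P) \<le> card S"
        using card_inj_on_le[OF inj img fin] .
      also have "card S = (\<Sum>y\<in>Q - {x}. m * card (EV m (Q - {x, y}) (P - {x, y})))"
        unfolding S_def using fQ less.prems
        by (subst card_SigmaI) (auto simp: card_cartesian_product intro!: finEV)
      also have "\<dots> \<le> (\<Sum>y\<in>Q - {x}. m * (((card Q - 2) * m) ^ ((card Q - 2) div 2) * m ^ (card P - card Q)))"
      proof (intro sum_mono mult_left_mono)
        fix y assume y: "y \<in> Q - {x}"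
        have c1: "card (Q - {x, y}) = card Q - 2" using x y fQ by (subst card_Diff_subset) auto
        have c2: "card (P - {x, y}) = card P - 2" using x y less.prems by (subst card_Diff_subset) auto
        have "card (Q - {x, y}) < card Q" using c1 cQ2 by simp
        from less.hyps[OF this, of "P - {x, y}"] less.prems
        have "card (EV m (Q - {x, y}) (P - {x, y})) \<le> (card (Q - {x, y}) * m) ^ (card (Q - {x, y}) div 2) * m ^ (card (P - {x, y}) - card (Q - {x, y}))"
          by auto
        also have "card (P - {x, y}) - card (Q - {x, y}) = card P - card Q"
          using c1 c2 cQ2 card_mono[OF less.prems] by simp
        finally show "card (EV m (Q - {x, y}) (P - {x, y})) \<le> ((card Q - 2) * m) ^ ((card Q - 2) div 2) * m ^ (card P - card Q)"
          using c1 by simp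
      qed simp
      also have "\<dots> = (card Q - 1) * m * ((card Q - 2) * m) ^ ((card Q - 2) div 2) * m ^ (card P - card Q)"
        using fQ x by (simp add: card_Diff_subset)
      also have "\<dots> \<le> (card Q * m) ^ (card Q div 2) * m ^ (card P - card Q)"
      proof -
        have d: "card Q div 2 = Suc ((card Q - 2) div 2)" using cQ2 evQ by presburger
        have "(card Q - 1) * m * ((card Q - 2) * m) ^ ((card Q - 2) div 2) \<le> (card Q * m) * (card Q * m) ^ ((card Q - 2) div 2)"
          by (intro mult_mono power_mono) auto
        then show ?thesis using d by (intro mult_right_mono) auto
      qed
      finally show ?thesis .
    qed
  qed
qed

lemma row_count:
  assumes "finite P" "i < m"
  shows "card {r \<in> PiE P (\<lambda>_. {..<m}). card {p\<in>P. r p = i} \<ge> K} \<le> (card P choose K) * m ^ (card P - K)"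
proof -
  define U where "U = {S. S \<subseteq> P \<and> card S = K}"
  define B where "B S = PiE P (\<lambda>p. if p \<in> S then {i} else {..<m})" for S
  have sub: "{r \<in> PiE P (\<lambda>_. {..<m}). card {p\<in>P. r p = i} \<ge> K} \<subseteq> (\<Union>S\<in>U. B S)"
  proof
    fix r assume r: "r \<in> {r \<in> PiE P (\<lambda>_. {..<m}). card {p\<in>P. r p = i} \<ge> K}"
    then obtain S where S: "S \<subseteq> {p\<in>P. r p = i}" "card S = K"
      using obtain_subset_with_card_n by (metis (no_types, lifting) mem_Collect_eq)
    then have "S \<in> U" by (auto simp: U_def)
    moreover have "r \<in> B S" using r S by (auto simp: B_def PiE_def Pi_def)
    ultimately show "r \<in> (\<Union>S\<in>U. B S)" by auto
  qed
  have finU: "finite U" unfolding U_def using assms by auto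
  have cB: "card (B S) = m ^ (card P - K)" if "S \<in> U" for S
  proof -
    have SP: "S \<subseteq> P" "card S = K" using that by (auto simp: U_def)
    have "card (B S) = (\<Prod>p\<in>P. card (if p \<in> S then {i} else {..<m}))"
      unfolding B_def using assms by (simp add: card_PiE)
    also have "\<dots> = (\<Prod>p\<in>P. (if p \<in> S then 1 else m))"
      by (intro prod.cong) auto
    also have "\<dots> = m ^ card (P - S)"
      using assms SP by (simp add: prod.If_cases Int_absorb1 Diff_eq[symmetric] inf_commute)
    also have "card (P - S) = card P - K" using SP assms by (simp add: card_Diff_subset finite_subset)
    finally show ?thesis .
  qed
  have "card {r \<in> PiE P (\<lambda>_. {..<m}). card {p\<in>P. r p = i} \<ge> K} \<le> card (\<Union>S\<in>U. B S)"
    using sub finU by (intro card_mono) (auto simp: B_def intro!: finite_PiE assms)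
  also have "\<dots> \<le> (\<Sum>S\<in>U. card (B S))" using finU by (rule card_UN_le)
  also have "\<dots> = (\<Sum>S\<in>U. m ^ (card P - K))" using cB by simp
  also have "\<dots> = (card P choose K) * m ^ (card P - K)"
    using n_subsets[OF assms(1), of K] by (simp add: U_def)
  finally show ?thesis .
qed




lemma sq_le_9pow: "d \<ge> 3 \<Longrightarrow> real d ^ 2 \<le> 9 ^ (d - 2)"
proof (induction d rule: dec_induct)
  case base then show ?case by simp
next
  case (step k)
  have "real (Suc k) ^ 2 \<le> 9 * real k ^ 2"
  proof -
    have "real (Suc k) \<le> 3 * real k" using step.hyps by simp
    then have "real (Suc k) ^ 2 \<le> (3 * real k) ^ 2" by (intro power_mono) auto
    then show ?thesis by (simp add: power_mult_distrib)
  qed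
  also have "\<dots> \<le> 9 * 9 ^ (k - 2)" using step.IH by simp
  also have "\<dots> = 9 ^ (Suc k - 2)"
  proof -
    have "Suc k - 2 = Suc (k - 2)" using step.hyps by simp
    then show ?thesis by (simp only: power_Suc)
  qed
  finally show ?case .
qed

lemma key_ineq:
  fixes c :: real
  assumes c: "c = 1/1296" and d: "d \<ge> 3" and m: "m > 0" and n: "n > 0" and t: "t \<ge> 0"
    and ts: "t \<le> c / real d * (real m ^ d / real n ^ 2) powr (1 / (real d - 2))"
  shows "144 * real n ^ 2 * t ^ (d - 2) * real d ^ d \<le> real m ^ d"
proof -
  define X where "X = real m ^ d / real n ^ 2"
  have X: "X > 0" using m n by (simp add: X_def)
  have dd: "real d - 2 = real (d - 2)" using d by simp
  have d2: "d - 2 > 0" using d by simp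
  have "t * real d / c \<le> X powr (1 / (real d - 2))"
    using ts d unfolding c X_def by (simp add: field_simps)
  then have "(t * real d / c) ^ (d - 2) \<le> (X powr (1 / (real d - 2))) ^ (d - 2)"
    using t by (intro power_mono) (auto simp: c)
  also have "\<dots> = X"
  proof -
    have "(X powr (1 / (real d - 2))) ^ (d - 2) = (X powr (1 / (real d - 2))) powr real (d - 2)"
      using X by (subst powr_realpow) auto
    also have "\<dots> = X powr (1 / (real d - 2) * real (d - 2))" by (rule powr_powr)
    also have "1 / (real d - 2) * real (d - 2) = 1" using d dd by simp
    finally show ?thesis using X by simp
  qed
  finally have h0: "(t * real d) ^ (d - 2) / c ^ (d - 2) \<le> X"
    by (simp add: power_divide)
  have cp: "c ^ (d - 2) > 0" using c by simp
  have h: "(t * real d) ^ (d - 2) \<le> c ^ (d - 2) * X"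
    using h0 cp by (simp add: pos_divide_le_eq mult.commute)
  have dsplit: "real d ^ d = real d ^ 2 * real d ^ (d - 2)"
  proof -
    have "d = 2 + (d - 2)" using d by simp
    then show ?thesis by (metis power_add)
  qed
  have "144 * real n ^ 2 * t ^ (d - 2) * real d ^ d = 144 * real d ^ 2 * real n ^ 2 * (t * real d) ^ (d - 2)"
    by (simp add: dsplit power_mult_distrib)
  also have "\<dots> \<le> 144 * real d ^ 2 * real n ^ 2 * (c ^ (d - 2) * X)"
    using h by (intro mult_left_mono) auto
  also have "\<dots> = 144 * real d ^ 2 * c ^ (d - 2) * real m ^ d"
    using n by (simp add: X_def)
  also have "\<dots> \<le> 1 * real m ^ d"
  proof (intro mult_right_mono)
    have "144 * real d ^ 2 * c ^ (d - 2) \<le> 144 * 9 ^ (d - 2) * c ^ (d - 2)"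
      using sq_le_9pow[OF d] c by (intro mult_right_mono) auto
    also have "\<dots> = 144 * (9 * c) ^ (d - 2)" by (simp add: power_mult_distrib)
    also have "\<dots> \<le> 144 * (9 * c) ^ 1"
      using c d2 by (intro mult_left_mono power_decreasing) auto
    also have "\<dots> = 1" using c by simp
    finally show "144 * real d ^ 2 * c ^ (d - 2) \<le> 1" .
  qed auto
  finally show ?thesis by simp
qed




lemma term_bound:
  fixes n m d t :: nat
  assumes d: "d \<ge> 3" and m: "m > 0" and t: "t \<ge> 1" and ev: "even (t * d)"
    and key: "144 * real n ^ 2 * real t ^ (d - 2) * real d ^ d \<le> real m ^ d"
  shows "real (n choose t) * real ((t * d * m) ^ (t * d div 2) * m ^ (n * d - t * d)) \<le> real m ^ (n * d) / 4 ^ t"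
proof (cases "t \<le> n")
  case False
  then show ?thesis by (simp add: binomial_eq_0)
next
  case True
  define q where "q = t * d div 2"
  have q2: "t * d = 2 * q" using ev by (simp add: q_def)
  have tdnd: "t * d \<le> n * d" using True by simp
  define C where "C = real (n choose t)"
  have C0: "C \<ge> 0" by (simp add: C_def)
  define a where "a = C * (real t * real d) ^ q * 4 ^ t"
  define b where "b = real m ^ q"
  have a0: "a \<ge> 0" using C0 by (simp add: a_def)
  have b0: "b \<ge> 0" by (simp add: b_def)
  have Cb: "(C * real t ^ t) ^ 2 \<le> ((3 * real n) ^ t) ^ 2"
    using binom_bound[of n t] C0 by (intro power_mono) (auto simp: C_def)
  have tsplit: "real t ^ (t * d) = (real t ^ t) ^ 2 * (real t ^ (d - 2)) ^ t"
  proof -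
    have "t * d = t * 2 + (d - 2) * t" using d by (simp add: algebra_simps)
    then show ?thesis by (metis power_add power_mult)
  qed
  have "a ^ 2 = C ^ 2 * (real t * real d) ^ (t * d) * 16 ^ t"
  proof -
    have e1: "((real t * real d) ^ q) ^ 2 = (real t * real d) ^ (t * d)"
    proof -
      have "q * 2 = t * d" using q2 by simp
      then show ?thesis by (simp add: power_mult[symmetric])
    qed
    have e2: "((4::real) ^ t) ^ 2 = 16 ^ t"
      by (simp add: power_mult[symmetric] mult.commute[of t 2] power_mult)
    define Y where "Y = (real t * real d) ^ q"
    define Z where "Z = (4::real) ^ t"
    have "a ^ 2 = C ^ 2 * Y ^ 2 * Z ^ 2" unfolding a_def Y_def[symmetric] Z_def[symmetric] by (simp add: power_mult_distrib)
    then show ?thesis using e1 e2 by (simp add: Y_def Z_def)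
  qed
  also have "\<dots> = (C * real t ^ t) ^ 2 * (16 * real t ^ (d - 2) * real d ^ d) ^ t"
  proof -
    have dpow: "real d ^ (t * d) = (real d ^ d) ^ t" by (simp add: power_mult[symmetric] mult.commute)
    show ?thesis unfolding power_mult_distrib tsplit dpow by (simp add: algebra_simps)
  qed
  also have "\<dots> \<le> ((3 * real n) ^ t) ^ 2 * (16 * real t ^ (d - 2) * real d ^ d) ^ t"
    using Cb by (intro mult_right_mono) auto
  also have "\<dots> = (144 * real n ^ 2 * real t ^ (d - 2) * real d ^ d) ^ t"
  proof -
    have "((3 * real n) ^ t) ^ 2 = ((3 * real n) ^ 2) ^ t" by (metis power_mult mult.commute)
    also have "(3 * real n) ^ 2 = 9 * real n ^ 2" by (simp add: power_mult_distrib)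
    finally have h: "((3 * real n) ^ t) ^ 2 = (9 * real n ^ 2) ^ t" .
    have "(9 * real n ^ 2) ^ t * (16 * real t ^ (d - 2) * real d ^ d) ^ t
        = (9 * real n ^ 2 * (16 * real t ^ (d - 2) * real d ^ d)) ^ t"
      by (simp only: power_mult_distrib[symmetric])
    also have "9 * real n ^ 2 * (16 * real t ^ (d - 2) * real d ^ d) = 144 * real n ^ 2 * real t ^ (d - 2) * real d ^ d"
      by simp
    finally show ?thesis using h by simp
  qed
  also have "\<dots> \<le> (real m ^ d) ^ t"
    using key by (intro power_mono) auto
  also have "\<dots> = b ^ 2"
  proof -
    have "d * t = q * 2" using q2 by (simp add: mult.commute)
    then show ?thesis by (simp add: b_def power_mult[symmetric])
  qed
  finally have "a \<le> b" by (rule power2_le_imp_le[OF _ b0])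
  have mnd: "real m ^ (n * d) = real m ^ (n * d - t * d) * real m ^ q * real m ^ q"
  proof -
    have e: "(n * d - t * d) + q + q = n * d" using tdnd q2 by linarith
    have "real m ^ (n * d) = real m ^ ((n * d - t * d) + q + q)" by (simp only: e)
    also have "\<dots> = real m ^ (n * d - t * d) * real m ^ q * real m ^ q" by (simp only: power_add)
    finally show ?thesis .
  qed
  have "real (n choose t) * real ((t * d * m) ^ (t * d div 2) * m ^ (n * d - t * d)) * 4 ^ t
      = a * real m ^ q * real m ^ (n * d - t * d)"
  proof -
    have "real ((t * d * m) ^ (t * d div 2) * m ^ (n * d - t * d)) = (real t * real d) ^ q * real m ^ q * real m ^ (n * d - t * d)"
      unfolding q_def[symmetric] of_nat_mult of_nat_power power_mult_distrib[of "real t * real d" "real m"] ..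
    then show ?thesis unfolding a_def C_def by (simp only: ac_simps)
  qed
  also have "\<dots> \<le> b * real m ^ q * real m ^ (n * d - t * d)"
    using \<open>a \<le> b\<close> by (intro mult_right_mono) auto
  also have "\<dots> = real m ^ (n * d)" by (simp add: b_def mnd)
  finally show ?thesis by (simp add: pos_le_divide_eq)
qed




lemma row_real:
  fixes L K m :: nat
  assumes m: "m \<ge> 3" and K: "real K \<ge> 5 * real L / real m" and K1: "K \<ge> 1"
    and Lm: "real L \<ge> real m * ln (real m)"
  shows "real m * real ((L choose K) * m ^ (L - K)) \<le> real m ^ L / 3"
proof (cases "K \<le> L")
  case False
  then show ?thesis by (simp add: binomial_eq_0)
next
  case True
  have mpos: "real m > 0" using m by simp
  have Kpos: "real K > 0" using K1 by simp
  define C where "C = real (L choose K)"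
  have C0: "C \<ge> 0" by (simp add: C_def)
  have CK: "C * real K ^ K \<le> (3 * real L) ^ K" using binom_bound[of L K] by (simp add: C_def)
  have "C \<le> (3 * real L) ^ K / real K ^ K" using CK Kpos by (simp add: pos_le_divide_eq)
  also have "\<dots> = (3 * real L / real K) ^ K" by (simp add: power_divide)
  also have "\<dots> \<le> (3 / 5 * real m) ^ K"
  proof (rule power_mono)
    have "5 * real L \<le> real K * real m" using K mpos by (simp add: pos_divide_le_eq)
    then show "3 * real L / real K \<le> 3 / 5 * real m" using Kpos by (simp add: pos_divide_le_eq)
  qed simp
  also have "(3 / 5 * real m) ^ K = (3/5) ^ K * real m ^ K" by (rule power_mult_distrib)
  finally have C1: "C \<le> (3/5) ^ K * real m ^ K" .
  have lnm: "ln (real m) \<ge> 0" using m by simp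
  have l35: "ln (3/5::real) \<le> - 2/5"
    using ln_le_minus_one[of "3/5::real"] by simp
  have "(3/5::real) ^ K = exp (real K * ln (3/5))"
    by (simp add: exp_of_nat_mult)
  also have "\<dots> \<le> exp (- 2 * ln (real m))"
  proof -
    have "real K \<ge> 5 * ln (real m)"
    proof -
      have "5 * real L / real m \<ge> 5 * ln (real m)"
        using Lm mpos by (simp add: pos_le_divide_eq mult.commute)
      then show ?thesis using K by linarith
    qed
    then have "real K * ln (3/5) \<le> 5 * ln (real m) * ln (3/5)"
      using l35 by (intro mult_right_mono_neg) auto
    also have "\<dots> \<le> 5 * ln (real m) * (-2/5)"
      using l35 lnm by (intro mult_left_mono) auto
    finally show ?thesis by simp
  qed
  also have "\<dots> = 1 / real m ^ 2"
  proof -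
    have "- 2 * ln (real m) = - (ln (real m) + ln (real m))" by simp
    then have "exp (- 2 * ln (real m)) = inverse (exp (ln (real m)) * exp (ln (real m)))"
      by (simp only: exp_minus exp_add)
    then show ?thesis using mpos by (simp add: power2_eq_square divide_inverse)
  qed
  finally have p: "(3/5::real) ^ K \<le> 1 / real m ^ 2" .
  have "real m * real ((L choose K) * m ^ (L - K)) = real m * C * real m ^ (L - K)"
    by (simp add: C_def)
  also have "\<dots> \<le> real m * ((3/5) ^ K * real m ^ K) * real m ^ (L - K)"
    using C1 mpos by (intro mult_right_mono mult_left_mono) auto
  also have "\<dots> = real m * (3/5) ^ K * real m ^ L"
  proof -
    have "real m ^ K * real m ^ (L - K) = real m ^ L" using True by (simp add: power_add[symmetric])
    then show ?thesis by (simp add: algebra_simps)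
  qed
  also have "\<dots> \<le> real m * (1 / real m ^ 2) * real m ^ L"
    using p mpos by (intro mult_right_mono mult_left_mono) auto
  also have "\<dots> = real m ^ L / real m" using mpos by (simp add: power2_eq_square)
  also have "\<dots> \<le> real m ^ L / 3" using m by (intro divide_left_mono) auto
  finally show ?thesis .
qed




lemma geom4: "(\<Sum>t\<in>{1..s}. (x::real) / 4 ^ t) = x / 3 * (1 - 1 / 4 ^ s)"
proof (induction s)
  case 0 then show ?case by simp
next
  case (Suc s)
  have "(\<Sum>t\<in>{1..Suc s}. x / 4 ^ t) = (\<Sum>t\<in>{1..s}. x / 4 ^ t) + x / 4 ^ Suc s"
    by (simp add: sum.atLeast_Suc_atMost_Suc_shift atLeastAtMostSuc_conv)
  also have "\<dots> = x / 3 * (1 - 1 / 4 ^ Suc s)" unfolding Suc.IH by (simp add: field_simps)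
  finally show ?case .
qed

lemma of_nat_bit: "(of_nat k :: bit) = (if even k then 0 else 1)"
  by (induction k) auto

lemma main_case:
  fixes d m n s :: nat and c :: real
  assumes c: "c = 1/1296"
    and h: "3 \<le> d" "3 \<le> m" "3 \<le> n" "d \<le> m" "m \<le> n"
    and hn: "real n \<ge> real m * ln (real m) / real d"
    and hs: "real s \<le> c / real d * (real m ^ d / real n ^ 2) powr (1 / (real d - 2))"
  shows "\<exists>A :: nat \<Rightarrow> nat \<Rightarrow> bit.
          (\<forall>S. S \<subseteq> {..<n} \<and> card S = s \<longrightarrow> gf2_cols_lin_indep m A S) \<and>
          (\<forall>j<n. card {i. i < m \<and> A i j \<noteq> 0} \<le> d) \<and>
          (\<forall>i<m. real (card {j. j < n \<and> A i j \<noteq> 0}) \<le> 5 * real d * real n / real m)"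
proof -
  define P where "P = {..<n} \<times> {..<d}"
  define \<Omega> where "\<Omega> = PiE P (\<lambda>_. {..<m})"
  define L where "L = n * d"
  have finP: "finite P" by (simp add: P_def)
  have cardP: "card P = L" by (simp add: P_def L_def card_cartesian_product)
  have card\<Omega>: "card \<Omega> = m ^ L" using finP cardP by (simp add: \<Omega>_def card_PiE_const)
  have fin\<Omega>: "finite \<Omega>" using finP by (simp add: \<Omega>_def finite_PiE)
  define K where "K = nat \<lfloor>5 * real d * real n / real m\<rfloor> + 1"
  define U where "U t = {T. T \<subseteq> {..<n} \<and> card T = t}" for t
  define B where "B t = (if even (t * d) then (t * d * m) ^ (t * d div 2) * m ^ (n * d - t * d) else 0)" for t
  define Bad1 where "Bad1 = (\<Union>t\<in>{1..s}. \<Union>T\<in>U t. EV m (T \<times> {..<d}) P)"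
  define Bad2 where "Bad2 = (\<Union>i\<in>{..<m}. {r \<in> \<Omega>. card {p\<in>P. r p = i} \<ge> K})"
  have finU: "finite (U t)" for t by (simp add: U_def)
  have EVT: "card (EV m (T \<times> {..<d}) P) \<le> B t" if T: "T \<in> U t" for T t
  proof -
    have TP: "T \<times> {..<d} \<subseteq> P" "card (T \<times> {..<d}) = t * d" "finite T"
      using T by (auto simp: U_def P_def card_cartesian_product intro: finite_subset)
    show ?thesis
    proof (cases "even (t * d)")
      case True
      have "card (EV m (T \<times> {..<d}) P) \<le> (card (T \<times> {..<d}) * m) ^ (card (T \<times> {..<d}) div 2) * m ^ (card P - card (T \<times> {..<d}))"
        by (rule EV_count[OF finP TP(1)])
      then show ?thesis using True TP by (simp add: B_def cardP L_def)
    next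
      case False
      have "EV m (T \<times> {..<d}) P = {}"
      proof (rule equals0I)
        fix g assume "g \<in> EV m (T \<times> {..<d}) P"
        then have "\<forall>v. even (card {p\<in>T \<times> {..<d}. g p = v})" by (simp add: EV_def)
        then show False using even_fibers_card[of "T \<times> {..<d}"] False TP by auto
      qed
      then show ?thesis by simp
    qed
  qed
  have mpos: "real m > 0" using h by simp
  have npos: "n > 0" using h by simp
  have Bt: "real (n choose t) * real (B t) \<le> real m ^ L / 4 ^ t" if t: "t \<in> {1..s}" for t
  proof (cases "even (t * d)")
    case False then show ?thesis by (simp add: B_def)
  next
    case True
    have ts: "real t \<le> c / real d * (real m ^ d / real n ^ 2) powr (1 / (real d - 2))"
      using t hs by auto
    have key: "144 * real n ^ 2 * real t ^ (d - 2) * real d ^ d \<le> real m ^ d"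
      using key_ineq[OF c h(1) _ npos _ ts] h by auto
    show ?thesis
      using term_bound[OF h(1) _ _ True key] t h True by (simp add: B_def L_def)
  qed
  have "card Bad1 \<le> (\<Sum>t\<in>{1..s}. card (\<Union>T\<in>U t. EV m (T \<times> {..<d}) P))"
    unfolding Bad1_def by (rule card_UN_le) simp
  also have "\<dots> \<le> (\<Sum>t\<in>{1..s}. \<Sum>T\<in>U t. card (EV m (T \<times> {..<d}) P))"
    by (intro sum_mono card_UN_le finU)
  also have "\<dots> \<le> (\<Sum>t\<in>{1..s}. \<Sum>T\<in>U t. B t)"
    by (intro sum_mono EVT)
  also have "\<dots> = (\<Sum>t\<in>{1..s}. (n choose t) * B t)"
    by (simp add: U_def n_subsets)
  finally have b1: "real (card Bad1) \<le> (\<Sum>t\<in>{1..s}. real (n choose t) * real (B t))"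
    by (metis (mono_tags, lifting) of_nat_le_iff of_nat_mult of_nat_sum sum.cong)
  also have "\<dots> \<le> (\<Sum>t\<in>{1..s}. real m ^ L / 4 ^ t)"
    by (intro sum_mono Bt)
  also have "\<dots> = real m ^ L / 3 * (1 - 1 / 4 ^ s)" by (rule geom4)
  also have "\<dots> < real m ^ L / 3" using mpos by simp
  finally have B1: "real (card Bad1) < real m ^ L / 3" .
  have K5: "real K \<ge> 5 * real L / real m"
  proof -
    have "5 * real d * real n / real m \<le> real (nat \<lfloor>5 * real d * real n / real m\<rfloor>) + 1"
      using mpos by linarith
    then show ?thesis by (simp add: K_def L_def algebra_simps)
  qed
  have Lm: "real L \<ge> real m * ln (real m)"
    using hn h by (simp add: L_def pos_divide_le_eq)
  have "card Bad2 \<le> (\<Sum>i\<in>{..<m}. card {r \<in> \<Omega>. card {p\<in>P. r p = i} \<ge> K})"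
    unfolding Bad2_def by (rule card_UN_le) simp
  also have "\<dots> \<le> (\<Sum>i\<in>{..<m}. (L choose K) * m ^ (L - K))"
    by (intro sum_mono) (use row_count[OF finP] cardP in \<open>auto simp: \<Omega>_def\<close>)
  also have "\<dots> = m * ((L choose K) * m ^ (L - K))" by simp
  finally have "real (card Bad2) \<le> real m * real ((L choose K) * m ^ (L - K))"
    by (metis of_nat_le_iff of_nat_mult)
  also have "\<dots> \<le> real m ^ L / 3"
    by (rule row_real[OF h(2) K5 _ Lm]) (simp add: K_def)
  finally have B2: "real (card Bad2) \<le> real m ^ L / 3" .
  have sub1: "Bad1 \<subseteq> \<Omega>" by (auto simp: Bad1_def EV_def \<Omega>_def)
  have sub2: "Bad2 \<subseteq> \<Omega>" by (auto simp: Bad2_def)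
  have "\<not> \<Omega> \<subseteq> Bad1 \<union> Bad2"
  proof
    assume "\<Omega> \<subseteq> Bad1 \<union> Bad2"
    then have "card \<Omega> \<le> card (Bad1 \<union> Bad2)"
      using sub1 sub2 fin\<Omega> by (intro card_mono) (auto intro: finite_subset)
    also have "\<dots> \<le> card Bad1 + card Bad2" by (rule card_Un_le)
    finally have "real (card \<Omega>) \<le> real (card Bad1) + real (card Bad2)" by linarith
    then show False using B1 B2 card\<Omega> by simp
  qed
  then obtain r where r\<Omega>: "r \<in> \<Omega>" and r1: "r \<notin> Bad1" and r2: "r \<notin> Bad2" by auto
  have rval: "r p < m" if "p \<in> P" for p using r\<Omega> that by (auto simp: \<Omega>_def)
  define A where "A i j = (of_nat (card {k. k < d \<and> r (j, k) = i}) :: bit)" for i j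
  have col: "\<forall>j<n. card {i. i < m \<and> A i j \<noteq> 0} \<le> d"
  proof (intro allI impI)
    fix j assume j: "j < n"
    have "{i. i < m \<and> A i j \<noteq> 0} \<subseteq> (\<lambda>k. r (j, k)) ` {..<d}"
    proof
      fix i assume "i \<in> {i. i < m \<and> A i j \<noteq> 0}"
      then have "A i j \<noteq> 0" by simp
      then have "card {k. k < d \<and> r (j, k) = i} \<noteq> 0" unfolding A_def by (metis of_nat_0)
      then obtain k where "k < d" "r (j, k) = i" by (metis (mono_tags, lifting) Collect_empty_eq card.empty)
      then show "i \<in> (\<lambda>k. r (j, k)) ` {..<d}" by auto
    qed
    then have "card {i. i < m \<and> A i j \<noteq> 0} \<le> card ((\<lambda>k. r (j, k)) ` {..<d})"
      by (intro card_mono) auto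
    also have "\<dots> \<le> card {..<d}" by (rule card_image_le) simp
    finally show "card {i. i < m \<and> A i j \<noteq> 0} \<le> d" by simp
  qed
  have row: "\<forall>i<m. real (card {j. j < n \<and> A i j \<noteq> 0}) \<le> 5 * real d * real n / real m"
  proof (intro allI impI)
    fix i assume i: "i < m"
    have "{j. j < n \<and> A i j \<noteq> 0} \<subseteq> fst ` {p\<in>P. r p = i}"
    proof
      fix j assume "j \<in> {j. j < n \<and> A i j \<noteq> 0}"
      then have j: "j < n" and "A i j \<noteq> 0" by auto
      then have "card {k. k < d \<and> r (j, k) = i} \<noteq> 0" unfolding A_def by (metis of_nat_0)
      then obtain k where "k < d" "r (j, k) = i" by (metis (mono_tags, lifting) Collect_empty_eq card.empty)
      then show "j \<in> fst ` {p\<in>P. r p = i}" using j by (force simp: P_def)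
    qed
    then have "card {j. j < n \<and> A i j \<noteq> 0} \<le> card (fst ` {p\<in>P. r p = i})"
      using finP by (intro card_mono) auto
    also have "\<dots> \<le> card {p\<in>P. r p = i}" by (rule card_image_le) (simp add: finP)
    also have "\<dots> < K" using r2 r\<Omega> i by (auto simp: Bad2_def not_le)
    finally have "card {j. j < n \<and> A i j \<noteq> 0} \<le> nat \<lfloor>5 * real d * real n / real m\<rfloor>"
      by (simp add: K_def)
    then have "real (card {j. j < n \<and> A i j \<noteq> 0}) \<le> real (nat \<lfloor>5 * real d * real n / real m\<rfloor>)"
      by (metis of_nat_le_iff)
    also have "\<dots> \<le> 5 * real d * real n / real m"
    proof -
      have "0 \<le> 5 * real d * real n / real m" using mpos by simp
      then show ?thesis by (simp add: of_nat_floor)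
    qed
    finally show "real (card {j. j < n \<and> A i j \<noteq> 0}) \<le> 5 * real d * real n / real m" .
  qed
  have indep: "\<forall>S. S \<subseteq> {..<n} \<and> card S = s \<longrightarrow> gf2_cols_lin_indep m A S"
  proof (intro allI impI)
    fix S assume S: "S \<subseteq> {..<n} \<and> card S = s"
    have finS: "finite S" using S finite_subset by blast
    show "gf2_cols_lin_indep m A S"
      unfolding gf2_cols_lin_indep_def
    proof (intro allI impI ballI)
      fix f :: "nat \<Rightarrow> bit" and j0
      assume f: "\<forall>i<m. (\<Sum>j\<in>S. f j * A i j) = 0" and j0: "j0 \<in> S"
      show "f j0 = 0"
      proof (rule ccontr)
        assume fj0: "f j0 \<noteq> 0"
        define T where "T = {j\<in>S. f j \<noteq> 0}"
        have TS: "T \<subseteq> S" by (auto simp: T_def)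
        have finT: "finite T" using finS TS finite_subset by blast
        have Tne: "T \<noteq> {}" using j0 fj0 by (auto simp: T_def)
        have cT: "card T \<in> {1..s}"
          using card_mono[OF finS TS] S finT Tne by (auto simp: card_gt_0_iff Suc_le_eq)
        have TU: "T \<in> U (card T)" using TS S by (auto simp: U_def)
        have ev: "even (card {p\<in>T \<times> {..<d}. r p = v})" for v
        proof (cases "v < m")
          case False
          have "{p\<in>T \<times> {..<d}. r p = v} = {}"
            using False rval TS S by (force simp: P_def)
          then show ?thesis by (metis card.empty even_zero)
        next
          case True
          have "(\<Sum>j\<in>S. f j * A v j) = (\<Sum>j\<in>T. f j * A v j)"
            by (rule sum.mono_neutral_right[OF finS TS]) (auto simp: T_def)
          also have "\<dots> = (\<Sum>j\<in>T. A v j)"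
            by (intro sum.cong) (auto simp: T_def)
          also have "\<dots> = of_nat (\<Sum>j\<in>T. card {k. k < d \<and> r (j, k) = v})"
            by (simp add: A_def)
          also have "(\<Sum>j\<in>T. card {k. k < d \<and> r (j, k) = v}) = card {p\<in>T \<times> {..<d}. r p = v}"
          proof -
            have "{p\<in>T \<times> {..<d}. r p = v} = Sigma T (\<lambda>j. {k. k < d \<and> r (j, k) = v})" by auto
            then show ?thesis using finT by simp
          qed
          finally have "(of_nat (card {p\<in>T \<times> {..<d}. r p = v}) :: bit) = 0"
            using f True by simp
          then show ?thesis by (simp add: of_nat_bit split: if_splits)
        qed
        have "r \<in> EV m (T \<times> {..<d}) P" using r\<Omega> ev by (simp add: EV_def \<Omega>_def)
        then have "r \<in> Bad1" using cT TU unfolding Bad1_def by blast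
        then show False using r1 by simp
      qed
    qed
  qed
  show ?thesis using indep col row by blast
qed

theorem lemma2p9:
  shows "\<exists>c::real. c > 0 \<and>
    (\<forall>d m n s :: nat.
       3 \<le> d \<longrightarrow> 3 \<le> m \<longrightarrow> 3 \<le> n \<longrightarrow> d \<le> m \<longrightarrow> m \<le> n \<longrightarrow>
       real n \<ge> real m * ln (real m) / real d \<longrightarrow>
       real s \<le> c / real d * (real m ^ d / real n ^ 2) powr (1 / (real d - 2)) \<longrightarrow>
       (\<exists>A :: nat \<Rightarrow> nat \<Rightarrow> bit.
          (\<forall>S. S \<subseteq> {..<n} \<and> card S = s \<longrightarrow> gf2_cols_lin_indep m A S) \<and>
          (\<forall>j<n. card {i. i < m \<and> A i j \<noteq> 0} \<le> d) \<and>
          (\<forall>i<m. real (card {j. j < n \<and> A i j \<noteq> 0}) \<le> 5 * real d * real n / real m)))"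
proof (rule exI[of _ "1/1296"], intro conjI allI impI)
  fix d m n s :: nat
  assume "3 \<le> d" "3 \<le> m" "3 \<le> n" "d \<le> m" "m \<le> n"
    "real n \<ge> real m * ln (real m) / real d"
    "real s \<le> 1/1296 / real d * (real m ^ d / real n ^ 2) powr (1 / (real d - 2))"
  then show "\<exists>A :: nat \<Rightarrow> nat \<Rightarrow> bit.
          (\<forall>S. S \<subseteq> {..<n} \<and> card S = s \<longrightarrow> gf2_cols_lin_indep m A S) \<and>
          (\<forall>j<n. card {i. i < m \<and> A i j \<noteq> 0} \<le> d) \<and>
          (\<forall>i<m. real (card {j. j < n \<and> A i j \<noteq> 0}) \<le> 5 * real d * real n / real m)"
    by (intro main_case[OF refl])
qed simp


end
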